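(* Let $U\subset\mathbb{R}^n$ be open, let $u\in C^2(U)$ with $u>0$, and let $w=\log u$. Define $$Qw=\Delta w-\frac{D^2w(Dw,Dw)}{1+|Dw|^2}+|Dw|^2 .$$ Then $$\operatorname{div}\frac{u\,Du}{\sqrt{u^2+|Du|^2}}\ge 0 \iff Qw\ge 0,\qquad \operatorname{div}\frac{u\,Du}{\sqrt{u^2+|Du|^2}}\le 0 \iff Qw\le 0,$$ and $$\operatorname{div}\frac{u\,Du}{\sqrt{u^2+|Du|^2}}= 0 \iff Qw= 0 .$$
   Context: $Du$ denotes the gradient, $D^2w$ the Hessian of $w$, and $D^2w(Dw,Dw)=\sum_{i,j}\partial_i\partial_j w\,\partial_i w\,\partial_j w$. *)

theory Defs
  imports "HOL-Analysis.Analysis"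
begin

definition grad :: "('a::euclidean_space \<Rightarrow> real) \<Rightarrow> 'a \<Rightarrow> 'a" where
  "grad f x = (\<Sum>i\<in>Basis. frechet_derivative f (at x) i *\<^sub>R i)"

definition hess :: "('a::euclidean_space \<Rightarrow> real) \<Rightarrow> 'a \<Rightarrow> 'a \<Rightarrow> 'a \<Rightarrow> real" where
  "hess f x i j = frechet_derivative (\<lambda>y. grad f y \<bullet> j) (at x) i"

definition laplacian :: "('a::euclidean_space \<Rightarrow> real) \<Rightarrow> 'a \<Rightarrow> real" where
  "laplacian f x = (\<Sum>i\<in>Basis. hess f x i i)"

definition hess_form :: "('a::euclidean_space \<Rightarrow> real) \<Rightarrow> 'a \<Rightarrow> 'a \<Rightarrow> 'a \<Rightarrow> real" where
  "hess_form f x v w = (\<Sum>i\<in>Basis. \<Sum>j\<in>Basis. hess f x i j * (v \<bullet> i) * (w \<bullet> j))"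

definition divergence :: "('a::euclidean_space \<Rightarrow> 'a) \<Rightarrow> 'a \<Rightarrow> real" where
  "divergence V x = (\<Sum>i\<in>Basis. frechet_derivative (\<lambda>y. V y \<bullet> i) (at x) i)"

definition C2_on :: "'a::euclidean_space set \<Rightarrow> ('a \<Rightarrow> real) \<Rightarrow> bool" where
  "C2_on U f \<longleftrightarrow>
     (\<forall>x\<in>U. f differentiable (at x)) \<and>
     (\<forall>j\<in>Basis. \<forall>x\<in>U. (\<lambda>y. grad f y \<bullet> j) differentiable (at x)) \<and>
     (\<forall>i\<in>Basis. \<forall>j\<in>Basis. continuous_on U (\<lambda>y. hess f y i j))"

definition Qop :: "('a::euclidean_space \<Rightarrow> real) \<Rightarrow> 'a \<Rightarrow> real" where
  "Qop w x = laplacian w x - hess_form w x (grad w x) (grad w x) / (1 + (norm (grad w x))\<^sup>2)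
             + (norm (grad w x))\<^sup>2"

end

theory Submission
  imports Defs
begin

lemma grad_inner:
  fixes f :: "'a::euclidean_space \<Rightarrow> real"
  assumes "j \<in> Basis"
  shows "grad f x \<bullet> j = frechet_derivative f (at x) j"
  unfolding grad_def using assms
  by (simp add: inner_sum_left inner_Basis if_distrib cong: if_cong)

lemma norm_sq_sum:
  fixes v :: "'a::euclidean_space"
  shows "(norm v)\<^sup>2 = (\<Sum>k\<in>Basis. (v \<bullet> k)\<^sup>2)"
  unfolding power2_norm_eq_inner by (subst euclidean_inner) (simp add: power2_eq_square)

lemma sign_lemma:
  fixes d q c :: real
  assumes "d = q * c" "c > 0"
  shows "(d \<ge> 0 \<longleftrightarrow> q \<ge> 0) \<and> (d \<le> 0 \<longleftrightarrow> q \<le> 0) \<and> (d = 0 \<longleftrightarrow> q = 0)"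
  using assms by (simp add: zero_le_mult_iff mult_le_0_iff)

theorem mainTheorem1:
  fixes U :: "'a::euclidean_space set" and u :: "'a \<Rightarrow> real"
  assumes "open U" and "C2_on U u" and "\<And>x. x \<in> U \<Longrightarrow> u x > 0"
  defines "w \<equiv> (\<lambda>x. ln (u x))"
  shows "\<forall>x\<in>U.
     (divergence (\<lambda>y. (u y / sqrt ((u y)\<^sup>2 + (norm (grad u y))\<^sup>2)) *\<^sub>R grad u y) x \<ge> 0 \<longleftrightarrow> Qop w x \<ge> 0) \<and>
     (divergence (\<lambda>y. (u y / sqrt ((u y)\<^sup>2 + (norm (grad u y))\<^sup>2)) *\<^sub>R grad u y) x \<le> 0 \<longleftrightarrow> Qop w x \<le> 0) \<and>
     (divergence (\<lambda>y. (u y / sqrt ((u y)\<^sup>2 + (norm (grad u y))\<^sup>2)) *\<^sub>R grad u y) x = 0 \<longleftrightarrow> Qop w x = 0)"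
proof
  fix x assume xU: "x \<in> U"
  let ?V = "(\<lambda>y. (u y / sqrt ((u y)\<^sup>2 + (norm (grad u y))\<^sup>2)) *\<^sub>R grad u y)"
  define Du where "Du = frechet_derivative u (at x)"
  define D where "D k = frechet_derivative (\<lambda>y. grad u y \<bullet> k) (at x)" for k
  define p where "p k = grad u x \<bullet> k" for k
  define H where "H i k = hess u x i k" for i k
  define u0 where "u0 = u x"
  define P where "P = (\<Sum>k\<in>Basis. (p k)\<^sup>2)"
  define T where "T = u0\<^sup>2 + P"
  define r where "r = sqrt T"
  define C where "C i = (\<Sum>k\<in>Basis. H i k * p k)" for i
  define B where "B = (\<Sum>i\<in>Basis. p i * C i)"
  define L where "L = (\<Sum>i\<in>Basis. H i i)"
  have u0pos: "u0 > 0" using assms(3) xU u0_def by auto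
  have P0: "P \<ge> 0" unfolding P_def by (simp add: sum_nonneg)
  have Tpos: "T > 0" using u0pos P0 unfolding T_def by (simp add: add_pos_nonneg)
  have rpos: "r > 0" using Tpos r_def by auto
  have rr: "r * r = T" using Tpos r_def by simp
  have hu: "(u has_derivative Du) (at x)"
    using assms(2) xU unfolding C2_on_def Du_def by (meson frechet_derivative_works)
  have hp: "((\<lambda>y. grad u y \<bullet> k) has_derivative D k) (at x)" if "k \<in> Basis" for k
    using assms(2) xU that unfolding C2_on_def D_def by (meson frechet_derivative_works)
  have Dup: "Du k = p k" if "k \<in> Basis" for k
    using grad_inner[OF that] unfolding Du_def p_def by simp
  have DH: "D k i = H i k" for i k
    unfolding D_def H_def hess_def by simp
  define S where "S y = (u y)\<^sup>2 + (\<Sum>k\<in>Basis. (grad u y \<bullet> k)\<^sup>2)" for y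
  have Sx: "S x = T" unfolding S_def T_def P_def p_def u0_def by simp
  have hS: "(S has_derivative (\<lambda>h. of_nat 2 * Du h * u x ^ (2-1) +
      (\<Sum>k\<in>Basis. of_nat 2 * D k h * (grad u x \<bullet> k) ^ (2-1)))) (at x)"
    unfolding S_def
    by (intro has_derivative_add has_derivative_power hu has_derivative_sum hp)
  have hR: "((\<lambda>y. sqrt (S y)) has_derivative (\<lambda>h. (of_nat 2 * Du h * u x ^ (2-1) +
      (\<Sum>k\<in>Basis. of_nat 2 * D k h * (grad u x \<bullet> k) ^ (2-1))) * (inverse (sqrt (S x)) / 2))) (at x)"
    by (rule DERIV_compose_FDERIV[OF DERIV_real_sqrt hS]) (simp add: Sx Tpos)
  have dV: "frechet_derivative (\<lambda>y. ?V y \<bullet> i) (at x) i =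
     ((u0 * H i i + p i * p i) * T - u0 * p i * (u0 * p i + C i)) / (r * T)" if i: "i \<in> Basis" for i
  proof -
    have eqf: "(\<lambda>y. ?V y \<bullet> i) = (\<lambda>y. (u y * (grad u y \<bullet> i)) / sqrt (S y))"
      by (rule ext) (simp add: S_def norm_sq_sum)
    have hN: "((\<lambda>y. u y * (grad u y \<bullet> i)) has_derivative (\<lambda>h. u x * D i h + Du h * (grad u x \<bullet> i))) (at x)"
      by (rule has_derivative_mult[OF hu hp[OF i]])
    note hQ = has_derivative_divide'[OF hN hR]
    have "frechet_derivative (\<lambda>y. ?V y \<bullet> i) (at x) i =
      ((u x * D i i + Du i * (grad u x \<bullet> i)) * sqrt (S x) - u x * (grad u x \<bullet> i) *
       ((of_nat 2 * Du i * u x ^ (2-1) +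
      (\<Sum>k\<in>Basis. of_nat 2 * D k i * (grad u x \<bullet> k) ^ (2-1))) * (inverse (sqrt (S x)) / 2)))
       / (sqrt (S x) * sqrt (S x))"
      unfolding eqf using hQ Sx Tpos by (simp add: frechet_derivative_at[symmetric])
    also have "\<dots> = ((u0 * H i i + p i * p i) * r - u0 * p i * ((2 * p i * u0 + 2 * C i) * (inverse r / 2))) / (r * r)"
      by (simp add: Sx r_def[symmetric] u0_def[symmetric] p_def[symmetric] Dup i DH C_def sum_distrib_left mult.assoc)
    also have "\<dots> = ((u0 * H i i + p i * p i) * T - u0 * p i * (u0 * p i + C i)) / (r * T)"
      unfolding rr[symmetric] using rpos by (simp add: field_simps)
    finally show ?thesis .
  qed
  have divV: "divergence ?V x = (u0 * L * T + P * P - u0 * B) / (r * T)"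
  proof -
    have "divergence ?V x = (\<Sum>i\<in>Basis. ((u0 * H i i + p i * p i) * T - u0 * p i * (u0 * p i + C i)) / (r * T))"
      unfolding divergence_def by (intro sum.cong refl dV)
    also have "\<dots> = (\<Sum>i\<in>Basis. (u0 * T * H i i + T * (p i)\<^sup>2 - u0 * u0 * (p i)\<^sup>2 - u0 * (p i * C i))) / (r * T)"
      by (simp add: sum_divide_distrib[symmetric] algebra_simps power2_eq_square)
    also have "\<dots> = (u0 * L * T + P * P - u0 * B) / (r * T)"
    proof -
      have "(\<Sum>i\<in>Basis. (u0 * T * H i i + T * (p i)\<^sup>2 - u0 * u0 * (p i)\<^sup>2 - u0 * (p i * C i)))
         = u0 * T * L + T * P - u0 * u0 * P - u0 * B"
        by (simp add: sum.distrib sum_subtractf sum_distrib_left[symmetric] L_def P_def B_def)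
      also have "\<dots> = u0 * L * T + P * P - u0 * B" unfolding T_def by (simp add: algebra_simps power2_eq_square)
      finally show ?thesis by simp
    qed
    finally show ?thesis .
  qed
  have gw: "grad w y \<bullet> j = (grad u y \<bullet> j) / u y" if y: "y \<in> U" and j: "j \<in> Basis" for y j
  proof -
    have "(u has_derivative frechet_derivative u (at y)) (at y)"
      using assms(2) y unfolding C2_on_def by (meson frechet_derivative_works)
    then have "(w has_derivative (\<lambda>h. frechet_derivative u (at y) h * inverse (u y))) (at y)"
      unfolding w_def by (rule DERIV_compose_FDERIV[where g=u and x=y, OF DERIV_ln[OF assms(3)[OF y]]])
    then show ?thesis
      using grad_inner[OF j, of w y] grad_inner[OF j, of u y] frechet_derivative_at
      by (metis divide_inverse)
  qed
  have hw: "hess w x i j = (H i j * u0 - p j * p i) / (u0 * u0)" if i: "i \<in> Basis" and j: "j \<in> Basis" for i j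
  proof -
    have "((\<lambda>y. (grad u y \<bullet> j) / u y) has_derivative (\<lambda>h. (D j h * u x - (grad u x \<bullet> j) * Du h) / (u x * u x))) (at x)"
      by (rule has_derivative_divide'[OF hp[OF j] hu]) (use u0pos u0_def in auto)
    then have "((\<lambda>y. grad w y \<bullet> j) has_derivative (\<lambda>h. (D j h * u x - (grad u x \<bullet> j) * Du h) / (u x * u x))) (at x)"
      by (rule has_derivative_transform_within_open[OF _ assms(1) xU]) (simp add: gw j)
    then show ?thesis unfolding hess_def
      by (simp add: frechet_derivative_at[symmetric] DH Dup i u0_def p_def)
  qed
  have gwx: "grad w x \<bullet> j = p j / u0" if "j \<in> Basis" for j
    using gw[OF xU that] p_def u0_def by simp
  have nw: "(norm (grad w x))\<^sup>2 = P / u0\<^sup>2"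
    unfolding norm_sq_sum P_def by (simp add: gwx power_divide sum_divide_distrib)
  have lw: "laplacian w x = (u0 * L - P) / (u0 * u0)"
    unfolding laplacian_def L_def P_def
    by (simp add: hw sum_divide_distrib[symmetric] sum_subtractf sum_distrib_left power2_eq_square algebra_simps)
  have hfw: "hess_form w x (grad w x) (grad w x) = (u0 * B - P * P) / u0^4"
  proof -
    have inner: "(\<Sum>j\<in>Basis. hess w x i j * (grad w x \<bullet> i) * (grad w x \<bullet> j)) = (u0 * (p i * C i) - (p i)\<^sup>2 * P) / u0^4"
      if i: "i \<in> Basis" for i
    proof -
      have "(\<Sum>j\<in>Basis. hess w x i j * (grad w x \<bullet> i) * (grad w x \<bullet> j)) =
         (\<Sum>j\<in>Basis. (u0 * (p i * (H i j * p j)) - (p i)\<^sup>2 * (p j)\<^sup>2) / u0^4)"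
        using u0pos by (intro sum.cong refl) (simp add: hw i gwx field_simps power2_eq_square eval_nat_numeral)
      also have "\<dots> = (u0 * (p i * C i) - (p i)\<^sup>2 * P) / u0^4"
        by (simp add: sum_divide_distrib[symmetric] sum_subtractf sum_distrib_left C_def P_def)
      finally show ?thesis .
    qed
    show ?thesis unfolding hess_form_def
      by (simp add: inner sum_divide_distrib[symmetric] sum_subtractf sum_distrib_left[symmetric]
            sum_distrib_right[symmetric] B_def P_def power2_eq_square)
  qed
  have Qw: "Qop w x = (u0 * L * T + P * P - u0 * B) / (u0 * u0 * T)"
  proof -
    have "Qop w x = (u0 * L - P) / (u0 * u0) - ((u0 * B - P * P) / u0^4) / (1 + P / u0\<^sup>2) + P / u0\<^sup>2"
      unfolding Qop_def lw hfw nw ..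
    also have "\<dots> = (u0 * L - P) / (u0 * u0) - ((u0 * B - P * P) / u0^4) / (T / (u0 * u0)) + P / (u0 * u0)"
      using u0pos unfolding T_def by (simp add: field_simps power2_eq_square)
    also have "\<dots> = (u0 * L * T + P * P - u0 * B) / (u0 * u0 * T)"
      using u0pos Tpos by (simp add: field_simps eval_nat_numeral)
    finally show ?thesis .
  qed
  define N where "N = u0 * L * T + P * P - u0 * B"
  have "divergence ?V x = Qop w x * (u0 * u0 / r)"
    unfolding divV Qw N_def[symmetric] using u0pos Tpos rpos by (simp add: field_simps)
  moreover have "u0 * u0 / r > 0" using u0pos rpos by simp
  ultimately show "(divergence ?V x \<ge> 0 \<longleftrightarrow> Qop w x \<ge> 0) \<and>
     (divergence ?V x \<le> 0 \<longleftrightarrow> Qop w x \<le> 0) \<and>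
     (divergence ?V x = 0 \<longleftrightarrow> Qop w x = 0)"
    using sign_lemma by metis
qed
end
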